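(* For any two undirected graphs $G,H$, with $G+H$ denoting their disjoint union, $\beta(G+H)=\beta(G)+\beta(H)$ and $\beta^*(G+H)=\beta^*(G)+\beta^*(H)$.
   Context: For an undirected graph $G$ on vertex set $[n]$, consider the index coding problem: a server holds messages $x_1,\dots,x_n\in\Sigma$ ($|\Sigma|>1$), receiver $i$ wants $x_i$ and knows $x_j$ for every neighbor $j$ of $i$. A solution is an encoding $\mathcal{E}:\Sigma^n\to\Sigma_P$ from which each receiver can recover its message given its side information, for all message values. $\beta_t(G)$ is the minimum of $\lceil\log_2|\Sigma_P|\rceil$ over solutions with $|\Sigma|=2^t$; $\beta(G)=\lim_t\beta_t(G)/t=\inf_t\beta_t(G)/t$. For a positive integer $t$, $t\cdot G$ denotes the disjoint union of $t$ copies of $G$, and $\beta^*(G)=\lim_{t\to\infty}\frac1t\beta_1(t\cdot G)=\inf_t\frac1t\beta_1(t\cdot G)$. *)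

theory Defs
  imports Complex_Main
begin

text \<open>A graph on vertex set [n] is represented by n and an edge predicate E on
  {0..<n} (vertices 0..n-1); only edges between vertices below n are relevant.\<close>

definition undirected :: "nat \<Rightarrow> (nat \<Rightarrow> nat \<Rightarrow> bool) \<Rightarrow> bool" where
  "undirected n E \<longleftrightarrow> (\<forall>i<n. \<forall>j<n. E i j = E j i) \<and> (\<forall>i<n. \<not> E i i)"

definition msgs :: "nat \<Rightarrow> nat \<Rightarrow> (nat \<Rightarrow> nat) set" where
  "msgs n t = {x. (\<forall>i<n. x i < 2 ^ t) \<and> (\<forall>i\<ge>n. x i = 0)}"

definition side :: "nat \<Rightarrow> (nat \<Rightarrow> nat \<Rightarrow> bool) \<Rightarrow> nat \<Rightarrow> (nat \<Rightarrow> nat) \<Rightarrow> (nat \<Rightarrow> nat)" where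
  "side n E i x = (\<lambda>j. if j < n \<and> E i j then x j else 0)"

definition ic_solution ::
  "nat \<Rightarrow> (nat \<Rightarrow> nat \<Rightarrow> bool) \<Rightarrow> nat \<Rightarrow> nat set \<Rightarrow> ((nat \<Rightarrow> nat) \<Rightarrow> nat) \<Rightarrow> bool" where
  "ic_solution n E t P enc \<longleftrightarrow> finite P \<and> enc ` msgs n t \<subseteq> P \<and>
     (\<exists>D. \<forall>i<n. \<forall>x\<in>msgs n t. D i (enc x) (side n E i x) = x i)"

definition beta_t :: "nat \<Rightarrow> (nat \<Rightarrow> nat \<Rightarrow> bool) \<Rightarrow> nat \<Rightarrow> nat" where
  "beta_t n E t = Inf {nat \<lceil>log 2 (real (card P))\<rceil> | P enc. ic_solution n E t P enc}"

definition beta :: "nat \<Rightarrow> (nat \<Rightarrow> nat \<Rightarrow> bool) \<Rightarrow> real" where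
  "beta n E = (INF t\<in>{1..}. real (beta_t n E t) / real t)"

text \<open>Disjoint union G + H: G on 0..n-1, H shifted to n..n+m-1.\<close>
definition dunion :: "nat \<Rightarrow> (nat \<Rightarrow> nat \<Rightarrow> bool) \<Rightarrow> nat \<Rightarrow> (nat \<Rightarrow> nat \<Rightarrow> bool) \<Rightarrow> (nat \<Rightarrow> nat \<Rightarrow> bool)" where
  "dunion n E m F = (\<lambda>i j. (i < n \<and> j < n \<and> E i j) \<or>
      (n \<le> i \<and> i < n + m \<and> n \<le> j \<and> j < n + m \<and> F (i - n) (j - n)))"

text \<open>t copies of G on t*n vertices: vertex k*n+i is copy k of vertex i.\<close>
definition copies :: "nat \<Rightarrow> nat \<Rightarrow> (nat \<Rightarrow> nat \<Rightarrow> bool) \<Rightarrow> (nat \<Rightarrow> nat \<Rightarrow> bool)" where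
  "copies t n E = (\<lambda>i j. i < t * n \<and> j < t * n \<and> i div n = j div n \<and> E (i mod n) (j mod n))"

definition beta_star :: "nat \<Rightarrow> (nat \<Rightarrow> nat \<Rightarrow> bool) \<Rightarrow> real" where
  "beta_star n E = (INF t\<in>{1..}. real (beta_t (t * n) (copies t n E) 1) / real t)"

end

theory Submission
  imports Defs "HOL-Library.Nat_Bijection" "HOL-Library.FuncSet" "HOL-Number_Theory.Cong"
begin

definition cf :: "nat \<Rightarrow> (nat \<Rightarrow> nat \<Rightarrow> bool) \<Rightarrow> (nat \<Rightarrow> nat) \<Rightarrow> (nat \<Rightarrow> nat) \<Rightarrow> bool" where
  "cf n E x y \<longleftrightarrow> (\<exists>i<n. x i \<noteq> y i \<and> (\<forall>j<n. E i j \<longrightarrow> x j = y j))"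

definition good :: "'a set \<Rightarrow> ('a \<Rightarrow> 'a \<Rightarrow> bool) \<Rightarrow> ('a \<Rightarrow> nat) \<Rightarrow> bool" where
  "good V R c \<longleftrightarrow> (\<forall>x\<in>V. \<forall>y\<in>V. R x y \<longrightarrow> c x \<noteq> c y)"

lemma cf_irrefl: "\<not> cf n E x x" by (simp add: cf_def)

lemma zero_msgs: "(\<lambda>_. 0) \<in> msgs n t" by (simp add: msgs_def)

lemma msgs_sub: "msgs n t \<subseteq> (\<lambda>f i. if i < n then f i else 0) ` (PiE {..<n} (\<lambda>_. {..<(2::nat)^t}))"
proof
  fix x assume x: "x \<in> msgs n t"
  let ?f = "restrict x {..<n}"
  have "?f \<in> PiE {..<n} (\<lambda>_. {..<(2::nat)^t})" using x by (auto simp: msgs_def)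
  moreover have "x = (\<lambda>i. if i < n then ?f i else 0)" using x by (auto simp: msgs_def)
  ultimately show "x \<in> (\<lambda>f i. if i < n then f i else 0) ` (PiE {..<n} (\<lambda>_. {..<(2::nat)^t}))" by blast
qed

lemma finite_msgs: "finite (msgs n t)"
  by (rule finite_subset[OF msgs_sub]) (auto intro!: finite_PiE)

lemma card_msgs_le: "card (msgs n t) \<le> 2 ^ (t * n)"
proof -
  have "card (msgs n t) \<le> card ((\<lambda>f i. if i < n then f i else 0) ` (PiE {..<n} (\<lambda>_. {..<(2::nat)^t})))"
    by (rule card_mono[OF _ msgs_sub]) (auto intro!: finite_PiE)
  also have "\<dots> \<le> card (PiE {..<n} (\<lambda>_. {..<(2::nat)^t}))" by (rule card_image_le) (auto intro!: finite_PiE)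
  also have "\<dots> = (2^t)^n" by (simp add: card_PiE)
  finally show ?thesis by (simp add: power_mult)
qed

lemma card_msgs_pos: "card (msgs n t) \<ge> 1"
  using finite_msgs zero_msgs by (metis One_nat_def Suc_leI card_gt_0_iff empty_iff)

lemma ic_good:
  assumes "ic_solution n E t P enc"
  shows "good (msgs n t) (cf n E) enc"
proof -
  from assms obtain D where D: "\<forall>i<n. \<forall>x\<in>msgs n t. D i (enc x) (side n E i x) = x i"
    by (auto simp: ic_solution_def)
  show ?thesis unfolding good_def
  proof (intro ballI impI notI)
    fix x y assume x: "x \<in> msgs n t" and y: "y \<in> msgs n t" and c: "cf n E x y" and e: "enc x = enc y"
    from c obtain i where i: "i < n" "x i \<noteq> y i" and nb: "\<forall>j<n. E i j \<longrightarrow> x j = y j"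
      by (auto simp: cf_def)
    have "side n E i x = side n E i y" using nb by (auto simp: side_def)
    then have "x i = y i" using D i x y e by metis
    with i show False by simp
  qed
qed

lemma good_ic:
  assumes "good (msgs n t) (cf n E) c"
  shows "ic_solution n E t (c ` msgs n t) c"
proof -
  define D where "D = (\<lambda>i p s. (SOME y. y \<in> msgs n t \<and> c y = p \<and> side n E i y = s) i)"
  have "\<forall>i<n. \<forall>x\<in>msgs n t. D i (c x) (side n E i x) = x i"
  proof (intro allI impI ballI)
    fix i x assume i: "i < n" and x: "x \<in> msgs n t"
    define y where "y = (SOME y. y \<in> msgs n t \<and> c y = c x \<and> side n E i y = side n E i x)"
    have y: "y \<in> msgs n t \<and> c y = c x \<and> side n E i y = side n E i x"
      unfolding y_def by (rule someI[of _ x]) (simp add: x)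
    have "y i = x i"
    proof (rule ccontr)
      assume ne: "y i \<noteq> x i"
      have "\<forall>j<n. E i j \<longrightarrow> x j = y j"
      proof (intro allI impI)
        fix j assume "j < n" "E i j"
        have "side n E i y j = side n E i x j" using y by simp
        then show "x j = y j" using \<open>j < n\<close> \<open>E i j\<close> by (simp add: side_def)
      qed
      then have "cf n E x y" using i ne by (auto simp: cf_def)
      then have "c x \<noteq> c y" using assms x y unfolding good_def by blast
      with y show False by simp
    qed
    then show "D i (c x) (side n E i x) = x i" by (simp add: D_def y_def)
  qed
  then show ?thesis unfolding ic_solution_def using finite_msgs by blast
qed

lemma beta_le:
  assumes "good (msgs n t) (cf n E) c"
  shows "beta_t n E t \<le> nat \<lceil>log 2 (real (card (c ` msgs n t)))\<rceil>"
proof -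
  have ic: "ic_solution n E t (c ` msgs n t) c" by (rule good_ic[OF assms])
  have mem: "nat \<lceil>log 2 (real (card (c ` msgs n t)))\<rceil> \<in> {nat \<lceil>log 2 (real (card P))\<rceil> | P enc. ic_solution n E t P enc}"
    by (rule CollectI, rule exI[of _ "c ` msgs n t"], rule exI[of _ c]) (simp add: ic)
  show ?thesis unfolding beta_t_def by (rule cInf_lower[OF mem]) (rule bdd_belowI[of _ 0], simp)
qed

lemma good_inj: "inj_on c V \<Longrightarrow> good V (cf n E) c"
  unfolding good_def inj_on_def using cf_irrefl by metis

lemma nat_ceil_log_le:
  assumes "1 \<le> k" "real k \<le> 2 ^ B"
  shows "nat \<lceil>log 2 (real k)\<rceil> \<le> B"
proof -
  have "log 2 (real k) \<le> log 2 (2 ^ B)" using assms by (intro log_le_cancel_iff[THEN iffD2]) auto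
  also have "\<dots> = B" by (simp add: log_nat_power)
  finally have "\<lceil>log 2 (real k)\<rceil> \<le> int B" by (simp add: ceiling_le_iff)
  then show ?thesis by (simp add: nat_le_iff)
qed

lemma beta_ex:
  "\<exists>c. good (msgs n t) (cf n E) c \<and> real (card (c ` msgs n t)) \<le> 2 ^ beta_t n E t"
proof -
  let ?S = "{nat \<lceil>log 2 (real (card P))\<rceil> | P enc. ic_solution n E t P enc}"
  obtain f :: "(nat \<Rightarrow> nat) \<Rightarrow> nat" and k where "inj_on f (msgs n t)"
    using finite_imp_inj_to_nat_seg[OF finite_msgs] by blast
  then have "ic_solution n E t (f ` msgs n t) f" using good_ic[OF good_inj] by auto
  then have "?S \<noteq> {}" by auto
  then have "Inf ?S \<in> ?S" by (rule Inf_nat_def1)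
  then obtain P enc where ic: "ic_solution n E t P enc" and b: "beta_t n E t = nat \<lceil>log 2 (real (card P))\<rceil>"
    unfolding beta_t_def by auto
  have fin: "finite P" and sub: "enc ` msgs n t \<subseteq> P" using ic by (auto simp: ic_solution_def)
  have "card (enc ` msgs n t) \<le> card P" by (rule card_mono[OF fin sub])
  have "P \<noteq> {}" using sub zero_msgs by blast
  then have P1: "card P \<ge> 1" using fin by (simp add: Suc_le_eq card_gt_0_iff)
  have "real (card P) = 2 powr (log 2 (card P))" using P1 by simp
  also have "\<dots> \<le> 2 powr (real (nat \<lceil>log 2 (real (card P))\<rceil>))"
    by (intro powr_mono) (auto, linarith)
  also have "\<dots> = 2 ^ beta_t n E t" by (simp add: b powr_realpow)
  finally show ?thesis using ic_good[OF ic] \<open>card (enc ` msgs n t) \<le> card P\<close>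
    by (metis (no_types, opaque_lifting) of_nat_le_iff order_trans)
qed


lemma prod_code:
  fixes f :: "'a \<Rightarrow> 'b \<times> 'c"
  assumes f: "\<forall>x\<in>V. f x \<in> V1 \<times> V2"
    and R: "\<forall>x\<in>V. \<forall>y\<in>V. R x y \<longrightarrow> R1 (fst (f x)) (fst (f y)) \<or> R2 (snd (f x)) (snd (f y))"
    and g1: "good V1 R1 c1" and g2: "good V2 R2 c2" and fin: "finite V1" "finite V2"
  shows "\<exists>c. good V R c \<and> card (c ` V) \<le> card (c1 ` V1) * card (c2 ` V2)"
proof -
  define c where "c = (\<lambda>x. prod_encode (c1 (fst (f x)), c2 (snd (f x))))"
  have "good V R c" unfolding good_def
  proof (intro ballI impI)
    fix x y assume x: "x \<in> V" and y: "y \<in> V" and r: "R x y"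
    have fx: "fst (f x) \<in> V1" "snd (f x) \<in> V2" using f x by (auto simp: mem_Times_iff)
    have fy: "fst (f y) \<in> V1" "snd (f y) \<in> V2" using f y by (auto simp: mem_Times_iff)
    from R x y r have "R1 (fst (f x)) (fst (f y)) \<or> R2 (snd (f x)) (snd (f y))" by blast
    then have "c1 (fst (f x)) \<noteq> c1 (fst (f y)) \<or> c2 (snd (f x)) \<noteq> c2 (snd (f y))"
      using g1 g2 fx fy unfolding good_def by blast
    then show "c x \<noteq> c y" unfolding c_def by (auto simp: prod_encode_eq)
  qed
  have "c ` V \<subseteq> prod_encode ` (c1 ` V1 \<times> c2 ` V2)"
    using f unfolding c_def by (auto simp: mem_Times_iff)
  then have "card (c ` V) \<le> card (prod_encode ` (c1 ` V1 \<times> c2 ` V2))"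
    by (intro card_mono) (use fin in auto)
  also have "\<dots> \<le> card (c1 ` V1 \<times> c2 ` V2)" by (rule card_image_le) (use fin in auto)
  also have "\<dots> = card (c1 ` V1) * card (c2 ` V2)" by (rule card_cartesian_product)
  finally show ?thesis using \<open>good V R c\<close> by blast
qed

lemma beta_prod:
  assumes f: "\<forall>x\<in>msgs N t. f x \<in> msgs N1 t1 \<times> msgs N2 t2"
    and R: "\<forall>x\<in>msgs N t. \<forall>y\<in>msgs N t. cf N E x y \<longrightarrow> cf N1 E1 (fst (f x)) (fst (f y)) \<or> cf N2 E2 (snd (f x)) (snd (f y))"
  shows "beta_t N E t \<le> beta_t N1 E1 t1 + beta_t N2 E2 t2"
proof -
  obtain c1 where c1: "good (msgs N1 t1) (cf N1 E1) c1" "real (card (c1 ` msgs N1 t1)) \<le> 2 ^ beta_t N1 E1 t1"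
    using beta_ex by blast
  obtain c2 where c2: "good (msgs N2 t2) (cf N2 E2) c2" "real (card (c2 ` msgs N2 t2)) \<le> 2 ^ beta_t N2 E2 t2"
    using beta_ex by blast
  obtain c where c: "good (msgs N t) (cf N E) c" "card (c ` msgs N t) \<le> card (c1 ` msgs N1 t1) * card (c2 ` msgs N2 t2)"
    using prod_code[OF f R c1(1) c2(1) finite_msgs finite_msgs] by blast
  have "real (card (c ` msgs N t)) \<le> real (card (c1 ` msgs N1 t1)) * real (card (c2 ` msgs N2 t2))"
    using c(2) by (metis of_nat_le_iff of_nat_mult)
  also have "\<dots> \<le> 2 ^ beta_t N1 E1 t1 * 2 ^ beta_t N2 E2 t2"
    by (rule mult_mono) (use c1 c2 in auto)
  also have "\<dots> = 2 ^ (beta_t N1 E1 t1 + beta_t N2 E2 t2)" by (simp add: power_add)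
  finally have le: "real (card (c ` msgs N t)) \<le> 2 ^ (beta_t N1 E1 t1 + beta_t N2 E2 t2)" .
  have "1 \<le> card (c ` msgs N t)"
    using finite_msgs zero_msgs by (metis Suc_leI card_gt_0_iff empty_is_image finite_imageI equals0D One_nat_def)
  then have "nat \<lceil>log 2 (real (card (c ` msgs N t)))\<rceil> \<le> beta_t N1 E1 t1 + beta_t N2 E2 t2"
    using le by (rule nat_ceil_log_le)
  then show ?thesis using beta_le[OF c(1)] by linarith
qed

definition indepset :: "'a set \<Rightarrow> ('a \<Rightarrow> 'a \<Rightarrow> bool) \<Rightarrow> 'a set \<Rightarrow> bool" where
  "indepset V R S \<longleftrightarrow> S \<subseteq> V \<and> (\<forall>x\<in>S. \<forall>y\<in>S. \<not> R x y)"

definition alpha :: "'a set \<Rightarrow> ('a \<Rightarrow> 'a \<Rightarrow> bool) \<Rightarrow> nat" where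
  "alpha V R = Max (card ` {S. indepset V R S})"

lemma alpha_fin: "finite V \<Longrightarrow> finite (card ` {S. indepset V R S})"
  by (rule finite_imageI, rule finite_subset[of _ "Pow V"]) (auto simp: indepset_def)

lemma alpha_ge: "finite V \<Longrightarrow> indepset V R S \<Longrightarrow> card S \<le> alpha V R"
  unfolding alpha_def by (rule Max_ge[OF alpha_fin]) auto

lemma alpha_ex: "finite V \<Longrightarrow> \<exists>I. indepset V R I \<and> card I = alpha V R"
proof -
  assume fin: "finite V"
  have "{} \<in> {S. indepset V R S}" by (simp add: indepset_def)
  then have "alpha V R \<in> card ` {S. indepset V R S}" unfolding alpha_def
    by (intro Max_in[OF alpha_fin[OF fin]]) blast
  then show ?thesis by auto
qed

lemma alpha_pos: "finite V \<Longrightarrow> v \<in> V \<Longrightarrow> \<not> R v v \<Longrightarrow> 1 \<le> alpha V R"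
  using alpha_ge[of V R "{v}"] by (simp add: indepset_def)

lemma low:
  fixes g :: "'b \<times> 'c \<Rightarrow> 'a"
  assumes bij: "bij_betw g (V1 \<times> V2) V"
    and R: "\<forall>p\<in>V1 \<times> V2. \<forall>q\<in>V1 \<times> V2. R1 (fst p) (fst q) \<or> R2 (snd p) (snd q) \<longrightarrow> R (g p) (g q)"
    and gd: "good V R c" and fin: "finite V1" "finite V2"
  shows "card V1 * card V2 \<le> card (c ` V) * (alpha V1 R1 * alpha V2 R2)"
proof -
  have finV: "finite V" using bij fin by (metis bij_betw_finite finite_cartesian_product)
  have "card V1 * card V2 = card V" using bij_betw_same_card[OF bij] by (simp add: card_cartesian_product)
  also have "V = (\<Union>k\<in>c ` V. {x\<in>V. c x = k})" by auto
  also have "card \<dots> \<le> (\<Sum>k\<in>c ` V. card {x\<in>V. c x = k})" by (rule card_UN_le) (use finV in auto)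
  also have "\<dots> \<le> (\<Sum>k\<in>c ` V. alpha V1 R1 * alpha V2 R2)"
  proof (rule sum_mono)
    fix k assume "k \<in> c ` V"
    define T where "T = {p\<in>V1 \<times> V2. c (g p) = k}"
    have "g ` T = {x\<in>V. c x = k}" using bij unfolding T_def bij_betw_def by auto
    moreover have "inj_on g T" using bij unfolding T_def bij_betw_def by (auto intro: inj_on_subset)
    ultimately have cT: "card {x\<in>V. c x = k} = card T" by (metis card_image)
    have sub: "T \<subseteq> fst ` T \<times> snd ` T" by force
    have i1: "indepset V1 R1 (fst ` T)" unfolding indepset_def
    proof (intro conjI ballI)
      show "fst ` T \<subseteq> V1" unfolding T_def by auto
    next
      fix a b assume a: "a \<in> fst ` T" and b: "b \<in> fst ` T"
      then obtain p q where p: "p \<in> T" "a = fst p" and q: "q \<in> T" "b = fst q" by auto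
      show "\<not> R1 a b"
      proof
        assume "R1 a b"
        then have "R (g p) (g q)" using R p q unfolding T_def by auto
        moreover have "g p \<in> V" "g q \<in> V" using p q bij unfolding T_def bij_betw_def by auto
        ultimately have "c (g p) \<noteq> c (g q)" using gd unfolding good_def by blast
        then show False using p q unfolding T_def by auto
      qed
    qed
    have i2: "indepset V2 R2 (snd ` T)" unfolding indepset_def
    proof (intro conjI ballI)
      show "snd ` T \<subseteq> V2" unfolding T_def by auto
    next
      fix a b assume a: "a \<in> snd ` T" and b: "b \<in> snd ` T"
      then obtain p q where p: "p \<in> T" "a = snd p" and q: "q \<in> T" "b = snd q" by auto
      show "\<not> R2 a b"
      proof
        assume "R2 a b"
        then have "R (g p) (g q)" using R p q unfolding T_def by auto
        moreover have "g p \<in> V" "g q \<in> V" using p q bij unfolding T_def bij_betw_def by auto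
        ultimately have "c (g p) \<noteq> c (g q)" using gd unfolding good_def by blast
        then show False using p q unfolding T_def by auto
      qed
    qed
    have finT: "finite T" unfolding T_def using fin by auto
    have "card T \<le> card (fst ` T \<times> snd ` T)" by (rule card_mono[OF _ sub]) (use finT in auto)
    also have "\<dots> = card (fst ` T) * card (snd ` T)" by (rule card_cartesian_product)
    also have "\<dots> \<le> alpha V1 R1 * alpha V2 R2"
      by (intro mult_mono alpha_ge[OF fin(1) i1] alpha_ge[OF fin(2) i2]) auto
    finally show "card {x\<in>V. c x = k} \<le> alpha V1 R1 * alpha V2 R2" using cT by simp
  qed
  also have "\<dots> = card (c ` V) * (alpha V1 R1 * alpha V2 R2)" by simp
  finally show ?thesis .
qed


lemma avg:
  assumes fin: "finite V" and IV: "I \<subseteq> V" and UV: "U \<subseteq> V"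
    and inj: "\<forall>g\<in>V. inj_on (\<tau> g) V"
    and one: "\<forall>u\<in>V. \<forall>w\<in>V. card {g\<in>V. \<tau> g w = u} = 1"
  shows "(\<Sum>g\<in>V. card (\<tau> g ` I \<inter> U)) = card I * card U"
proof -
  have finI: "finite I" using fin IV finite_subset by blast
  have finU: "finite U" using fin UV finite_subset by blast
  have 1: "card (\<tau> g ` I \<inter> U) = (\<Sum>w\<in>I. if \<tau> g w \<in> U then 1 else 0)" if g: "g \<in> V" for g
  proof -
    have "\<tau> g ` I \<inter> U = \<tau> g ` {w\<in>I. \<tau> g w \<in> U}" by auto
    moreover have "inj_on (\<tau> g) {w\<in>I. \<tau> g w \<in> U}" using inj g IV by (auto intro: inj_on_subset)
    ultimately have "card (\<tau> g ` I \<inter> U) = card {w\<in>I. \<tau> g w \<in> U}" by (simp add: card_image)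
    also have "\<dots> = (\<Sum>w\<in>I. if \<tau> g w \<in> U then 1 else 0)"
      using finI by (simp add: sum.If_cases Int_def)
    finally show ?thesis .
  qed
  have 2: "(\<Sum>g\<in>V. if \<tau> g w \<in> U then 1 else 0) = card U" if w: "w \<in> I" for w
  proof -
    have "(\<Sum>g\<in>V. if \<tau> g w \<in> U then 1 else 0) = card {g\<in>V. \<tau> g w \<in> U}"
      using fin by (simp add: sum.If_cases Int_def)
    also have "{g\<in>V. \<tau> g w \<in> U} = (\<Union>u\<in>U. {g\<in>V. \<tau> g w = u})" by auto
    also have "card \<dots> = (\<Sum>u\<in>U. card {g\<in>V. \<tau> g w = u})"
      by (rule card_UN_disjoint) (use finU fin in auto)
    also have "\<dots> = (\<Sum>u\<in>U. 1)" using one UV w IV by (intro sum.cong) auto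
    finally show ?thesis by simp
  qed
  have "(\<Sum>g\<in>V. card (\<tau> g ` I \<inter> U)) = (\<Sum>g\<in>V. \<Sum>w\<in>I. if \<tau> g w \<in> U then 1 else 0)"
    using 1 by (rule sum.cong[OF refl])
  also have "\<dots> = (\<Sum>w\<in>I. \<Sum>g\<in>V. if \<tau> g w \<in> U then 1 else 0)" by (rule sum.swap)
  also have "\<dots> = (\<Sum>w\<in>I. card U)" using 2 by (rule sum.cong[OF refl])
  finally show ?thesis by simp
qed

lemma avg_ex:
  assumes fin: "finite V" and ne: "V \<noteq> {}" and IV: "I \<subseteq> V" and UV: "U \<subseteq> V"
    and inj: "\<forall>g\<in>V. inj_on (\<tau> g) V"
    and one: "\<forall>u\<in>V. \<forall>w\<in>V. card {g\<in>V. \<tau> g w = u} = 1"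
  shows "\<exists>g\<in>V. card I * card U \<le> card (\<tau> g ` I \<inter> U) * card V"
proof (rule ccontr)
  assume "\<not> ?thesis"
  then have lt: "\<forall>g\<in>V. card (\<tau> g ` I \<inter> U) * card V < card I * card U" by auto
  have "(\<Sum>g\<in>V. card (\<tau> g ` I \<inter> U) * card V) < (\<Sum>g\<in>V. card I * card U)"
    by (rule sum_strict_mono) (use fin ne lt in auto)
  also have "\<dots> = card V * (card I * card U)" by simp
  also have "(\<Sum>g\<in>V. card (\<tau> g ` I \<inter> U) * card V) = (card I * card U) * card V"
    using avg[OF fin IV UV inj one] by (simp add: sum_distrib_right[symmetric])
  finally show False by simp
qed

lemma cover_iter:
  assumes fin: "finite V" and ne: "V \<noteq> {}" and IV: "I \<subseteq> V"
    and inj: "\<forall>g\<in>V. inj_on (\<tau> g) V"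
    and one: "\<forall>u\<in>V. \<forall>w\<in>V. card {g\<in>V. \<tau> g w = u} = 1"
  shows "\<exists>gs. set gs \<subseteq> V \<and> length gs = s \<and>
    real (card (V - (\<Union>g\<in>set gs. \<tau> g ` I))) \<le> real (card V) * (1 - real (card I) / real (card V)) ^ s"
proof (induction s)
  case 0
  show ?case by (rule exI[of _ "[]"]) (simp add: card_mono fin)
next
  case (Suc s)
  then obtain gs where gs: "set gs \<subseteq> V" "length gs = s"
    and le: "real (card (V - (\<Union>g\<in>set gs. \<tau> g ` I))) \<le> real (card V) * (1 - real (card I) / real (card V)) ^ s"
    by blast
  define U where "U = V - (\<Union>g\<in>set gs. \<tau> g ` I)"
  have UV: "U \<subseteq> V" unfolding U_def by auto
  obtain g where g: "g \<in> V" and gle: "card I * card U \<le> card (\<tau> g ` I \<inter> U) * card V"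
    using avg_ex[OF fin ne IV UV inj one] by blast
  have finU: "finite U" using UV fin finite_subset by blast
  have U': "V - (\<Union>h\<in>set (g # gs). \<tau> h ` I) = U - (\<tau> g ` I \<inter> U)" unfolding U_def by auto
  have cU': "card (U - (\<tau> g ` I \<inter> U)) = card U - card (\<tau> g ` I \<inter> U)"
    by (rule card_Diff_subset) (use finU in auto)
  have Npos: "real (card V) > 0" using fin ne by (simp add: card_gt_0_iff)
  have IleV: "card I \<le> card V" using IV fin by (rule card_mono[rotated])
  have p01: "0 \<le> 1 - real (card I) / real (card V)" using IleV Npos by (simp add: field_simps)
  have k: "real (card I) * real (card U) / real (card V) \<le> real (card (\<tau> g ` I \<inter> U))"
    using gle Npos by (simp add: field_simps) (metis of_nat_le_iff of_nat_mult)
  have "real (card (U - (\<tau> g ` I \<inter> U))) = real (card U) - real (card (\<tau> g ` I \<inter> U))"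
    using cU' card_mono[OF finU, of "\<tau> g ` I \<inter> U"] by auto
  also have "\<dots> \<le> real (card U) * (1 - real (card I) / real (card V))"
    using k by (simp add: field_simps)
  also have "\<dots> \<le> real (card V) * (1 - real (card I) / real (card V)) ^ s * (1 - real (card I) / real (card V))"
    by (rule mult_right_mono) (use le p01 in \<open>auto simp: U_def\<close>)
  finally have "real (card (U - (\<tau> g ` I \<inter> U))) \<le> real (card V) * (1 - real (card I) / real (card V)) ^ Suc s"
    by (simp add: mult_ac)
  then show ?case using gs g U'
    by (intro exI[of _ "g # gs"]) auto
qed


lemma cover_color:
  assumes fin: "finite V" and ne: "V \<noteq> {}" and IV: "I \<subseteq> V" and Ine: "I \<noteq> {}"
    and indep: "\<forall>x\<in>I. \<forall>y\<in>I. \<not> R x y"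
    and inj: "\<forall>g\<in>V. inj_on (\<tau> g) V"
    and one: "\<forall>u\<in>V. \<forall>w\<in>V. card {g\<in>V. \<tau> g w = u} = 1"
    and inv: "\<forall>g\<in>V. \<forall>x\<in>V. \<forall>y\<in>V. R (\<tau> g x) (\<tau> g y) \<longrightarrow> R x y"
  shows "\<exists>c. good V R c \<and> real (card (c ` V)) \<le> real (card V) / real (card I) * (ln (real (card V)) + 2)"
proof -
  define N where "N = real (card V)"
  define a where "a = real (card I)"
  define p where "p = a / N"
  have Npos: "N > 0" using fin ne by (simp add: N_def card_gt_0_iff)
  have apos: "a > 0" using fin IV Ine by (simp add: a_def card_gt_0_iff finite_subset)
  have aleN: "a \<le> N" unfolding a_def N_def using card_mono[OF fin IV] by simp
  have "card V \<ge> 1" using fin ne by (simp add: Suc_le_eq card_gt_0_iff)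
  then have N1: "N \<ge> 1" unfolding N_def by simp
  have lnN: "ln N \<ge> 0" using N1 by simp
  define s where "s = nat \<lceil>N / a * (ln N + 1)\<rceil>"
  obtain gs where gs: "set gs \<subseteq> V" "length gs = s"
    and le: "real (card (V - (\<Union>g\<in>set gs. \<tau> g ` I))) \<le> N * (1 - p) ^ s"
    using cover_iter[OF fin ne IV inj one, of s] unfolding N_def p_def a_def by blast
  have p01: "0 \<le> 1 - p" using aleN Npos by (simp add: p_def field_simps)
  have "(1 - p) ^ s \<le> exp (- p) ^ s"
    by (rule power_mono) (use p01 exp_ge_add_one_self[of "-p"] in auto)
  also have "\<dots> = exp (real s * (- p))" by (rule exp_of_nat_mult[symmetric])
  also have "\<dots> \<le> exp (- (ln N + 1))"
  proof -
    have "N / a * (ln N + 1) \<le> real s" unfolding s_def by (rule real_nat_ceiling_ge)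
    then have "p * (N / a * (ln N + 1)) \<le> p * real s"
      by (rule mult_left_mono) (use apos Npos in \<open>simp add: p_def\<close>)
    moreover have "p * (N / a * (ln N + 1)) = ln N + 1" using apos Npos by (simp add: p_def field_simps)
    ultimately have "ln N + 1 \<le> real s * p" by (simp add: mult.commute)
    then show ?thesis by simp
  qed
  also have "\<dots> = exp (-1) / N" using Npos by (simp add: exp_diff exp_minus field_simps)
  finally have "N * (1 - p) ^ s \<le> exp (-1)" using Npos by (simp add: field_simps)
  also have "exp (-1) < (1::real)" by simp
  finally have "real (card (V - (\<Union>g\<in>set gs. \<tau> g ` I))) < 1" using le by linarith
  then have "card (V - (\<Union>g\<in>set gs. \<tau> g ` I)) = 0" by linarith
  then have cov: "V \<subseteq> (\<Union>g\<in>set gs. \<tau> g ` I)" using fin by auto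
  define c where "c = (\<lambda>x. LEAST j. j < length gs \<and> x \<in> \<tau> (gs ! j) ` I)"
  have cx: "c x < length gs \<and> x \<in> \<tau> (gs ! c x) ` I" if x: "x \<in> V" for x
  proof -
    obtain g where g: "g \<in> set gs" "x \<in> \<tau> g ` I" using cov x by blast
    then obtain j where "j < length gs" "gs ! j = g" by (metis in_set_conv_nth)
    then have "\<exists>j. j < length gs \<and> x \<in> \<tau> (gs ! j) ` I" using g by blast
    then show ?thesis unfolding c_def by (rule LeastI_ex)
  qed
  have good: "good V R c" unfolding good_def
  proof (intro ballI impI notI)
    fix x y assume x: "x \<in> V" and y: "y \<in> V" and r: "R x y" and e: "c x = c y"
    define g where "g = gs ! c x"
    have gV: "g \<in> V" using cx[OF x] gs unfolding g_def by auto
    obtain x' where x': "x' \<in> I" "x = \<tau> g x'" using cx[OF x] unfolding g_def by blast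
    obtain y' where y': "y' \<in> I" "y = \<tau> g y'" using cx[OF y] e unfolding g_def by auto
    have "R x' y'" using inv gV x' y' IV r by blast
    then show False using indep x' y' by blast
  qed
  have "c ` V \<subseteq> {..<s}" using cx gs by auto
  then have "card (c ` V) \<le> s" by (metis card_lessThan card_mono finite_lessThan)
  then have "real (card (c ` V)) \<le> real s" by simp
  also have "\<dots> \<le> N / a * (ln N + 1) + 1"
  proof -
    have "0 \<le> N / a * (ln N + 1)" using apos Npos lnN by simp
    then show ?thesis unfolding s_def using of_int_ceiling_le_add_one[of "N / a * (ln N + 1)"] by linarith
  qed
  also have "\<dots> \<le> N / a * (ln N + 2)"
  proof -
    have "1 \<le> N / a" using apos aleN by simp
    moreover have "N / a * (ln N + 2) = N / a * (ln N + 1) + N / a" by (simp add: distrib_left)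
    ultimately show ?thesis by linarith
  qed
  finally show ?thesis using good unfolding N_def a_def by blast
qed

definition tr :: "nat \<Rightarrow> nat \<Rightarrow> (nat \<Rightarrow> nat) \<Rightarrow> (nat \<Rightarrow> nat) \<Rightarrow> (nat \<Rightarrow> nat)" where
  "tr n t g x = (\<lambda>i. if i < n then (x i + g i) mod 2 ^ t else 0)"

lemma mod_cancel:
  fixes a b g M :: nat
  assumes "a < M" "b < M" "(a + g) mod M = (b + g) mod M"
  shows "a = b"
proof -
  have "[a + g = b + g] (mod M)" using assms(3) by (simp add: cong_def)
  then have "[a = b] (mod M)" by (simp add: cong_add_rcancel_nat)
  then show ?thesis using assms by (simp add: cong_def)
qed

lemma mod_solve1:
  fixes w u M :: nat
  assumes "w < M" "u < M"
  shows "(w + (u + M - w) mod M) mod M = u"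
proof -
  have "(w + (u + M - w) mod M) mod M = (w + (u + M - w)) mod M" by (simp add: mod_add_right_eq)
  also have "w + (u + M - w) = u + M" using assms by simp
  finally show ?thesis using assms by simp
qed

lemma mod_solve2:
  fixes w u g M :: nat
  assumes "w < M" "g < M" "(w + g) mod M = u"
  shows "g = (u + M - w) mod M"
proof -
  have "(u + (M - w)) mod M = ((w + g) + (M - w)) mod M" using assms(3) mod_add_left_eq[of "w+g" M "M-w"] by simp
  also have "(w + g) + (M - w) = g + M" using assms by simp
  finally show ?thesis using assms by simp
qed

lemma tr_in: "tr n t g x \<in> msgs n t"
  by (simp add: tr_def msgs_def)

lemma tr_inj: "inj_on (tr n t g) (msgs n t)"
proof (rule inj_onI)
  fix x y assume x: "x \<in> msgs n t" and y: "y \<in> msgs n t" and e: "tr n t g x = tr n t g y"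
  show "x = y"
  proof
    fix i show "x i = y i"
    proof (cases "i < n")
      case True
      then have "(x i + g i) mod 2 ^ t = (y i + g i) mod 2 ^ t" using fun_cong[OF e, of i] by (simp add: tr_def)
      then show ?thesis using mod_cancel x y True by (auto simp: msgs_def)
    next
      case False then show ?thesis using x y by (simp add: msgs_def)
    qed
  qed
qed

lemma tr_cf: 
  assumes x: "x \<in> msgs n t" and y: "y \<in> msgs n t" and c: "cf n E (tr n t g x) (tr n t g y)"
  shows "cf n E x y"
proof -
  have eq: "tr n t g x j = tr n t g y j \<longleftrightarrow> x j = y j" if j: "j < n" for j
  proof
    assume "tr n t g x j = tr n t g y j"
    then have "(x j + g j) mod 2 ^ t = (y j + g j) mod 2 ^ t" using j by (simp add: tr_def)
    then show "x j = y j" using mod_cancel x y j by (auto simp: msgs_def)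
  qed (simp add: tr_def)
  from c obtain i where "i < n" "tr n t g x i \<noteq> tr n t g y i" "\<forall>j<n. E i j \<longrightarrow> tr n t g x j = tr n t g y j"
    by (auto simp: cf_def)
  then show ?thesis unfolding cf_def using eq by blast
qed

lemma tr_one:
  assumes u: "u \<in> msgs n t" and w: "w \<in> msgs n t"
  shows "card {g \<in> msgs n t. tr n t g w = u} = 1"
proof -
  define g0 where "g0 = (\<lambda>i. if i < n then (u i + 2 ^ t - w i) mod 2 ^ t else 0)"
  have "{g \<in> msgs n t. tr n t g w = u} = {g0}"
  proof (intro equalityI subsetI)
    fix g assume "g \<in> {g \<in> msgs n t. tr n t g w = u}"
    then have g: "g \<in> msgs n t" and e: "tr n t g w = u" by auto
    show "g \<in> {g0}"
    proof (simp, rule ext)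
      fix i show "g i = g0 i"
      proof (cases "i < n")
        case True
        have "(w i + g i) mod 2 ^ t = u i" using fun_cong[OF e, of i] True by (simp add: tr_def)
        then show ?thesis using mod_solve2[of "w i" "2^t" "g i" "u i"] w g True by (auto simp: msgs_def g0_def)
      next
        case False then show ?thesis using g by (simp add: msgs_def g0_def)
      qed
    qed
  next
    fix g assume "g \<in> {g0}"
    then have g: "g = g0" by simp
    have "g0 \<in> msgs n t" by (simp add: g0_def msgs_def)
    moreover have "tr n t g0 w = u"
    proof
      fix i show "tr n t g0 w i = u i"
        using mod_solve1[of "w i" "2^t" "u i"] u w by (auto simp: tr_def g0_def msgs_def)
    qed
    ultimately show "g \<in> {g \<in> msgs n t. tr n t g w = u}" using g by simp
  qed
  then show ?thesis by simp
qed

lemma cover_msgs: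
  "\<exists>c. good (msgs n t) (cf n E) c \<and>
     real (card (c ` msgs n t)) \<le> real (card (msgs n t)) / real (alpha (msgs n t) (cf n E)) * (ln (real (card (msgs n t))) + 2)"
proof -
  obtain I where I: "indepset (msgs n t) (cf n E) I" "card I = alpha (msgs n t) (cf n E)"
    using alpha_ex[OF finite_msgs] by blast
  have "1 \<le> alpha (msgs n t) (cf n E)" using alpha_pos[OF finite_msgs zero_msgs] cf_irrefl by blast
  then have Ine: "I \<noteq> {}" using I by auto
  have ne: "msgs n t \<noteq> {}" using zero_msgs by blast
  show ?thesis
    using cover_color[OF finite_msgs ne _ Ine, of "cf n E" "tr n t"] I tr_inj tr_one tr_cf
    unfolding indepset_def by auto
qed


lemma alpha_le_card: "finite V \<Longrightarrow> alpha V R \<le> card V"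
  using alpha_ex[of V R] by (metis card_mono indepset_def)

lemma card_img_pos: "1 \<le> card (c ` msgs n t)"
  using finite_msgs zero_msgs by (metis Suc_leI card_gt_0_iff empty_is_image finite_imageI equals0D One_nat_def)

lemma beta_upper_alpha:
  "real (beta_t n E t) \<le> log 2 (real (card (msgs n t)) / real (alpha (msgs n t) (cf n E)))
      + log 2 (real t * real n + 2) + 1"
proof -
  define M where "M = real (card (msgs n t))"
  define a where "a = real (alpha (msgs n t) (cf n E))"
  obtain c where c: "good (msgs n t) (cf n E) c" "real (card (c ` msgs n t)) \<le> M / a * (ln M + 2)"
    using cover_msgs unfolding M_def a_def by blast
  define k where "k = real (card (c ` msgs n t))"
  have k1: "k \<ge> 1" unfolding k_def using card_img_pos by simp
  have a1: "a \<ge> 1" unfolding a_def using alpha_pos[OF finite_msgs zero_msgs] cf_irrefl by fastforce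
  have M1: "M \<ge> 1" unfolding M_def using card_msgs_pos by simp
  have Mle: "M \<le> 2 ^ (t * n)" unfolding M_def using card_msgs_le
    by (metis of_nat_le_iff of_nat_numeral of_nat_power)
  have lnM: "ln M \<le> real t * real n"
  proof -
    have "ln M \<le> ln (2 ^ (t * n))" using M1 Mle by simp
    also have "\<dots> = real (t * n) * ln 2" by (simp add: ln_realpow)
    also have "\<dots> \<le> real (t * n) * 1" using ln_2_less_1 by (intro mult_left_mono) auto
    finally show ?thesis by simp
  qed
  have lnM0: "ln M \<ge> 0" using M1 by simp
  have "real (beta_t n E t) \<le> real (nat \<lceil>log 2 k\<rceil>)" using beta_le[OF c(1)] unfolding k_def by simp
  also have "\<dots> \<le> log 2 k + 1"
  proof -
    have "log 2 k \<ge> 0" using k1 by simp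
    then show ?thesis using of_int_ceiling_le_add_one[of "log 2 k"] by linarith
  qed
  also have "log 2 k \<le> log 2 (M / a * (ln M + 2))"
    using k1 c(2) unfolding k_def by (intro log_mono) auto
  also have "\<dots> = log 2 (M / a) + log 2 (ln M + 2)"
  proof (rule log_mult_pos)
    show "0 < M / a" using M1 a1 by simp
    show "0 < ln M + 2" using lnM0 by linarith
  qed
  also have "log 2 (ln M + 2) \<le> log 2 (real t * real n + 2)"
    using lnM lnM0 by (intro log_mono) auto
  finally show ?thesis unfolding M_def a_def by linarith
qed

lemma beta_lower_alpha:
  fixes G :: "(nat \<Rightarrow> nat) \<times> (nat \<Rightarrow> nat) \<Rightarrow> (nat \<Rightarrow> nat)"
  assumes bij: "bij_betw G (msgs N1 t \<times> msgs N2 t) (msgs N t)"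
    and R: "\<forall>p\<in>msgs N1 t \<times> msgs N2 t. \<forall>q\<in>msgs N1 t \<times> msgs N2 t.
       cf N1 E1 (fst p) (fst q) \<or> cf N2 E2 (snd p) (snd q) \<longrightarrow> cf N E (G p) (G q)"
  shows "log 2 (real (card (msgs N1 t)) / real (alpha (msgs N1 t) (cf N1 E1)))
       + log 2 (real (card (msgs N2 t)) / real (alpha (msgs N2 t) (cf N2 E2))) \<le> real (beta_t N E t)"
proof -
  define M1 where "M1 = real (card (msgs N1 t))"
  define M2 where "M2 = real (card (msgs N2 t))"
  define a1 where "a1 = real (alpha (msgs N1 t) (cf N1 E1))"
  define a2 where "a2 = real (alpha (msgs N2 t) (cf N2 E2))"
  obtain c where c: "good (msgs N t) (cf N E) c" "real (card (c ` msgs N t)) \<le> 2 ^ beta_t N E t"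
    using beta_ex by blast
  define k where "k = real (card (c ` msgs N t))"
  have "card (msgs N1 t) * card (msgs N2 t) \<le> card (c ` msgs N t) * (alpha (msgs N1 t) (cf N1 E1) * alpha (msgs N2 t) (cf N2 E2))"
    by (rule low[OF bij R c(1) finite_msgs finite_msgs])
  then have kk: "M1 * M2 \<le> k * (a1 * a2)" unfolding M1_def M2_def k_def a1_def a2_def
    by (metis of_nat_le_iff of_nat_mult)
  have pa1: "a1 \<ge> 1" unfolding a1_def using alpha_pos[OF finite_msgs zero_msgs] cf_irrefl by fastforce
  have pa2: "a2 \<ge> 1" unfolding a2_def using alpha_pos[OF finite_msgs zero_msgs] cf_irrefl by fastforce
  have pM1: "M1 \<ge> 1" unfolding M1_def using card_msgs_pos by simp
  have pM2: "M2 \<ge> 1" unfolding M2_def using card_msgs_pos by simp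
  have k1: "k \<ge> 1" unfolding k_def using card_img_pos by simp
  have "log 2 (M1 / a1) + log 2 (M2 / a2) = log 2 (M1 / a1 * (M2 / a2))"
  proof (rule log_mult_pos[symmetric])
    show "0 < M1 / a1" using pM1 pa1 by simp
    show "0 < M2 / a2" using pM2 pa2 by simp
  qed
  also have "\<dots> \<le> log 2 k"
  proof (intro log_mono)
    show "M1 / a1 * (M2 / a2) \<le> k" using kk pa1 pa2 by (simp add: field_simps)
  qed (use pa1 pa2 pM1 pM2 in auto)
  also have "\<dots> \<le> log 2 (2 ^ beta_t N E t)" using k1 c(2) unfolding k_def by (intro log_mono) auto
  also have "\<dots> = real (beta_t N E t)" by (simp add: log_nat_power)
  finally show ?thesis unfolding M1_def M2_def a1_def a2_def .
qed


context
  fixes N NA NB :: nat and E EA EB :: "nat \<Rightarrow> nat \<Rightarrow> bool"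
    and s :: "nat \<Rightarrow> bool" and idx sa sb :: "nat \<Rightarrow> nat"
  assumes h1: "\<forall>i<NA. sa i < N \<and> s (sa i) \<and> idx (sa i) = i"
    and h2: "\<forall>i<NB. sb i < N \<and> \<not> s (sb i) \<and> idx (sb i) = i"
    and h3: "\<forall>k<N. s k \<longrightarrow> idx k < NA \<and> sa (idx k) = k"
    and h4: "\<forall>k<N. \<not> s k \<longrightarrow> idx k < NB \<and> sb (idx k) = k"
    and h5: "\<forall>k<N. \<forall>l<N. E k l \<longleftrightarrow> (s k \<and> s l \<and> EA (idx k) (idx l)) \<or> (\<not> s k \<and> \<not> s l \<and> EB (idx k) (idx l))"
begin

definition GG :: "(nat \<Rightarrow> nat) \<times> (nat \<Rightarrow> nat) \<Rightarrow> (nat \<Rightarrow> nat)" where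
  "GG p = (\<lambda>k. if k < N then (if s k then fst p (idx k) else snd p (idx k)) else 0)"

definition FF :: "(nat \<Rightarrow> nat) \<Rightarrow> (nat \<Rightarrow> nat) \<times> (nat \<Rightarrow> nat)" where
  "FF x = ((\<lambda>i. if i < NA then x (sa i) else 0), (\<lambda>i. if i < NB then x (sb i) else 0))"

lemma GG_in: "p \<in> msgs NA t \<times> msgs NB t \<Longrightarrow> GG p \<in> msgs N t"
  using h3 h4 by (auto simp: GG_def msgs_def mem_Times_iff)

lemma FF_in: "x \<in> msgs N t \<Longrightarrow> FF x \<in> msgs NA t \<times> msgs NB t"
  using h1 h2 by (auto simp: FF_def msgs_def mem_Times_iff)

lemma GG_FF: "x \<in> msgs N t \<Longrightarrow> GG (FF x) = x"
  using h3 h4 by (auto simp: GG_def FF_def msgs_def fun_eq_iff)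

lemma FF_GG: "p \<in> msgs NA t \<times> msgs NB t \<Longrightarrow> FF (GG p) = p"
  using h1 h2 by (cases p) (auto simp: GG_def FF_def msgs_def fun_eq_iff mem_Times_iff)

lemma GG_bij: "bij_betw GG (msgs NA t \<times> msgs NB t) (msgs N t)"
proof (rule bij_betw_byWitness[of _ FF])
  show "\<forall>a\<in>msgs NA t \<times> msgs NB t. FF (GG a) = a" using FF_GG by blast
  show "\<forall>a'\<in>msgs N t. GG (FF a') = a'" using GG_FF by blast
  show "GG ` (msgs NA t \<times> msgs NB t) \<subseteq> msgs N t" using GG_in by blast
  show "FF ` msgs N t \<subseteq> msgs NA t \<times> msgs NB t" using FF_in by blast
qed

lemma GG_cf:
  assumes p: "p \<in> msgs NA t \<times> msgs NB t" and q: "q \<in> msgs NA t \<times> msgs NB t"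
  shows "cf N E (GG p) (GG q) \<longleftrightarrow> cf NA EA (fst p) (fst q) \<or> cf NB EB (snd p) (snd q)"
proof
  assume "cf N E (GG p) (GG q)"
  then obtain k where k: "k < N" "GG p k \<noteq> GG q k" and nb: "\<forall>l<N. E k l \<longrightarrow> GG p l = GG q l"
    unfolding cf_def by blast
  show "cf NA EA (fst p) (fst q) \<or> cf NB EB (snd p) (snd q)"
  proof (cases "s k")
    case True
    have ik: "idx k < NA" using h3 k True by blast
    have d: "fst p (idx k) \<noteq> fst q (idx k)" using k True by (simp add: GG_def)
    have "\<forall>j<NA. EA (idx k) j \<longrightarrow> fst p j = fst q j"
    proof (intro allI impI)
      fix j assume j: "j < NA" "EA (idx k) j"
      have l: "sa j < N" "s (sa j)" "idx (sa j) = j" using h1 j by auto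
      have "E k (sa j)" using h5 k l True j by auto
      then have "GG p (sa j) = GG q (sa j)" using nb l by blast
      then show "fst p j = fst q j" using l by (simp add: GG_def)
    qed
    then have "cf NA EA (fst p) (fst q)" using ik d unfolding cf_def by blast
    then show ?thesis by blast
  next
    case False
    have ik: "idx k < NB" using h4 k False by blast
    have d: "snd p (idx k) \<noteq> snd q (idx k)" using k False by (simp add: GG_def)
    have "\<forall>j<NB. EB (idx k) j \<longrightarrow> snd p j = snd q j"
    proof (intro allI impI)
      fix j assume j: "j < NB" "EB (idx k) j"
      have l: "sb j < N" "\<not> s (sb j)" "idx (sb j) = j" using h2 j by auto
      have "E k (sb j)" using h5 k l False j by auto
      then have "GG p (sb j) = GG q (sb j)" using nb l by blast
      then show "snd p j = snd q j" using l by (simp add: GG_def)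
    qed
    then have "cf NB EB (snd p) (snd q)" using ik d unfolding cf_def by blast
    then show ?thesis by blast
  qed
next
  assume "cf NA EA (fst p) (fst q) \<or> cf NB EB (snd p) (snd q)"
  then show "cf N E (GG p) (GG q)"
  proof
    assume "cf NA EA (fst p) (fst q)"
    then obtain i where i: "i < NA" "fst p i \<noteq> fst q i" and nb: "\<forall>j<NA. EA i j \<longrightarrow> fst p j = fst q j"
      unfolding cf_def by blast
    have k: "sa i < N" "s (sa i)" "idx (sa i) = i" using h1 i by auto
    have d: "GG p (sa i) \<noteq> GG q (sa i)" using k i by (simp add: GG_def)
    have "\<forall>l<N. E (sa i) l \<longrightarrow> GG p l = GG q l"
    proof (intro allI impI)
      fix l assume l: "l < N" "E (sa i) l"
      then have "s l \<and> EA i (idx l)" using h5 k by auto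
      moreover have "idx l < NA" using h3 l \<open>s l \<and> EA i (idx l)\<close> by blast
      ultimately show "GG p l = GG q l" using nb l by (simp add: GG_def)
    qed
    then show ?thesis using k d unfolding cf_def by blast
  next
    assume "cf NB EB (snd p) (snd q)"
    then obtain i where i: "i < NB" "snd p i \<noteq> snd q i" and nb: "\<forall>j<NB. EB i j \<longrightarrow> snd p j = snd q j"
      unfolding cf_def by blast
    have k: "sb i < N" "\<not> s (sb i)" "idx (sb i) = i" using h2 i by auto
    have d: "GG p (sb i) \<noteq> GG q (sb i)" using k i by (simp add: GG_def)
    have "\<forall>l<N. E (sb i) l \<longrightarrow> GG p l = GG q l"
    proof (intro allI impI)
      fix l assume l: "l < N" "E (sb i) l"
      then have "\<not> s l \<and> EB i (idx l)" using h5 k by auto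
      moreover have "idx l < NB" using h4 l \<open>\<not> s l \<and> EB i (idx l)\<close> by blast
      ultimately show "GG p l = GG q l" using nb l by (simp add: GG_def)
    qed
    then show ?thesis using k d unfolding cf_def by blast
  qed
qed

lemma relabel_up: "beta_t N E t \<le> beta_t NA EA t + beta_t NB EB t"
proof (rule beta_prod[of N t FF])
  show "\<forall>x\<in>msgs N t. FF x \<in> msgs NA t \<times> msgs NB t" using FF_in by blast
  show "\<forall>x\<in>msgs N t. \<forall>y\<in>msgs N t. cf N E x y \<longrightarrow> cf NA EA (fst (FF x)) (fst (FF y)) \<or> cf NB EB (snd (FF x)) (snd (FF y))"
  proof (intro ballI impI)
    fix x y assume x: "x \<in> msgs N t" and y: "y \<in> msgs N t" and c: "cf N E x y"
    have "cf N E (GG (FF x)) (GG (FF y))" using c GG_FF x y by simp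
    then show "cf NA EA (fst (FF x)) (fst (FF y)) \<or> cf NB EB (snd (FF x)) (snd (FF y))"
      using GG_cf[OF FF_in[OF x] FF_in[OF y]] by blast
  qed
qed

lemma relabel_low:
  "real (beta_t NA EA t) + real (beta_t NB EB t) \<le> real (beta_t N E t) + 2
     + log 2 (real t * real NA + 2) + log 2 (real t * real NB + 2)"
proof -
  have "log 2 (real (card (msgs NA t)) / real (alpha (msgs NA t) (cf NA EA)))
       + log 2 (real (card (msgs NB t)) / real (alpha (msgs NB t) (cf NB EB))) \<le> real (beta_t N E t)"
    by (rule beta_lower_alpha[OF GG_bij]) (use GG_cf in blast)
  moreover note beta_upper_alpha[of NA EA t] beta_upper_alpha[of NB EB t]
  ultimately show ?thesis by linarith
qed

end


lemma beta_const:
  assumes "\<forall>x\<in>msgs n t. \<forall>y\<in>msgs n t. \<not> cf n E x y"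
  shows "beta_t n E t = 0"
proof -
  have g: "good (msgs n t) (cf n E) (\<lambda>_. 0)" using assms by (simp add: good_def)
  have "(\<lambda>_. 0::nat) ` msgs n t = {0}" using zero_msgs by blast
  then show ?thesis using beta_le[OF g] by simp
qed

lemma beta_zero_alph: "beta_t n E 0 = 0"
proof (rule beta_const, intro ballI)
  fix x y assume "x \<in> msgs n 0" "y \<in> msgs n 0"
  then have "x = y" by (auto simp: msgs_def fun_eq_iff) (metis not_less)
  then show "\<not> cf n E x y" by (simp add: cf_irrefl)
qed

lemma beta_zero_vert: "beta_t 0 E t = 0"
  by (rule beta_const) (simp add: cf_def)

lemma beta_alph_add: "beta_t n E (a + b) \<le> beta_t n E a + beta_t n E b"
proof (rule beta_prod[of n "a + b" "\<lambda>x. (\<lambda>i. x i mod 2 ^ a, \<lambda>i. x i div 2 ^ a)"])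
  show "\<forall>x\<in>msgs n (a + b). (\<lambda>i. x i mod 2 ^ a, \<lambda>i. x i div 2 ^ a) \<in> msgs n a \<times> msgs n b"
  proof
    fix x assume x: "x \<in> msgs n (a + b)"
    have "x i div 2 ^ a < 2 ^ b" if "i < n" for i
    proof -
      have "x i < 2 ^ b * 2 ^ a" using x that by (simp add: msgs_def power_add mult.commute)
      then show ?thesis by (simp add: less_mult_imp_div_less)
    qed
    then show "(\<lambda>i. x i mod 2 ^ a, \<lambda>i. x i div 2 ^ a) \<in> msgs n a \<times> msgs n b"
      using x by (simp add: msgs_def)
  qed
  show "\<forall>x\<in>msgs n (a + b). \<forall>y\<in>msgs n (a + b). cf n E x y \<longrightarrow>
      cf n E (fst (\<lambda>i. x i mod 2 ^ a, \<lambda>i. x i div 2 ^ a)) (fst (\<lambda>i. y i mod 2 ^ a, \<lambda>i. y i div 2 ^ a)) \<or>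
      cf n E (snd (\<lambda>i. x i mod 2 ^ a, \<lambda>i. x i div 2 ^ a)) (snd (\<lambda>i. y i mod 2 ^ a, \<lambda>i. y i div 2 ^ a))"
  proof (intro ballI impI)
    fix x y :: "nat \<Rightarrow> nat" assume "cf n E x y"
    then obtain i where i: "i < n" "x i \<noteq> y i" and nb: "\<forall>j<n. E i j \<longrightarrow> x j = y j" unfolding cf_def by blast
    have "x i mod 2 ^ a \<noteq> y i mod 2 ^ a \<or> x i div 2 ^ a \<noteq> y i div 2 ^ a"
      using i(2) by (metis div_mult_mod_eq)
    then show "cf n E (fst (\<lambda>i. x i mod 2 ^ a, \<lambda>i. x i div 2 ^ a)) (fst (\<lambda>i. y i mod 2 ^ a, \<lambda>i. y i div 2 ^ a)) \<or>
      cf n E (snd (\<lambda>i. x i mod 2 ^ a, \<lambda>i. x i div 2 ^ a)) (snd (\<lambda>i. y i mod 2 ^ a, \<lambda>i. y i div 2 ^ a))"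
      using i nb unfolding cf_def by auto
  qed
qed

lemma beta_alph_mult: "beta_t n E (k * t) \<le> k * beta_t n E t"
proof (induction k)
  case 0 then show ?case by (simp add: beta_zero_alph)
next
  case (Suc k)
  have "beta_t n E (Suc k * t) = beta_t n E (t + k * t)" by simp
  also have "\<dots> \<le> beta_t n E t + beta_t n E (k * t)" by (rule beta_alph_add)
  also have "\<dots> \<le> Suc k * beta_t n E t" using Suc by simp
  finally show ?case .
qed

lemma dunion_up: "beta_t (n + m) (dunion n E m F) t \<le> beta_t n E t + beta_t m F t"
  by (rule relabel_up[where N="n + m" and NA=n and NB=m and s="\<lambda>k. k < n" and idx="\<lambda>k. if k < n then k else k - n" and sa="\<lambda>i. i" and sb="\<lambda>i. i + n"])
     (auto simp: dunion_def)

lemma dunion_low: "real (beta_t n E t) + real (beta_t m F t) \<le> real (beta_t (n + m) (dunion n E m F) t) + 2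
     + log 2 (real t * real n + 2) + log 2 (real t * real m + 2)"
  by (rule relabel_low[where N="n + m" and NA=n and NB=m and s="\<lambda>k. k < n" and idx="\<lambda>k. if k < n then k else k - n" and sa="\<lambda>i. i" and sb="\<lambda>i. i + n"])
     (auto simp: dunion_def)


lemma qr_div: "r < P \<Longrightarrow> (q * P + r) div P = (q::nat)"
  by simp
lemma qr_mod: "r < P \<Longrightarrow> (q * P + r) mod P = (r::nat)"
  by simp
lemma qr_lt: "q < t \<Longrightarrow> r < P \<Longrightarrow> q * P + r < t * (P::nat)"
proof -
  assume "q < t" "r < P"
  then have "q * P + r < q * P + P" by simp
  also have "\<dots> = Suc q * P" by simp
  also have "\<dots> \<le> t * P" using \<open>q < t\<close> by (intro mult_right_mono) auto
  finally show ?thesis .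
qed

lemma copies_add: "copies (a + b) N D = dunion (a * N) (copies a N D) (b * N) (copies b N D)"
proof (intro ext)
  fix i j
  show "copies (a + b) N D i j = dunion (a * N) (copies a N D) (b * N) (copies b N D) i j"
  proof (cases "N = 0")
    case True then show ?thesis by (simp add: copies_def dunion_def)
  next
    case False
    then have N: "0 < N" by simp
    have ab: "(a + b) * N = a * N + b * N" by (simp add: add_mult_distrib)
    consider (1) "i < a * N" "j < a * N" | (2) "i < a * N" "\<not> j < a * N" | (3) "\<not> i < a * N" "j < a * N"
      | (4) "\<not> i < a * N" "\<not> j < a * N" by blast
    then show ?thesis
    proof cases
      case 1 then show ?thesis by (simp add: copies_def dunion_def ab)
    next
      case 2
      have "i div N < a" using 2 N by (simp add: div_less_iff_less_mult)
      moreover have "\<not> j div N < a" using 2 N by (simp add: div_less_iff_less_mult)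
      ultimately have "i div N \<noteq> j div N" by auto
      then show ?thesis using 2 by (simp add: copies_def dunion_def)
    next
      case 3
      have "j div N < a" using 3 N by (simp add: div_less_iff_less_mult)
      moreover have "\<not> i div N < a" using 3 N by (simp add: div_less_iff_less_mult)
      ultimately have "i div N \<noteq> j div N" by auto
      then show ?thesis using 3 by (simp add: copies_def dunion_def)
    next
      case 4
      obtain r1 where r1: "i = r1 + a * N" using 4 by (metis add.commute le_add_diff_inverse not_less)
      obtain r2 where r2: "j = r2 + a * N" using 4 by (metis add.commute le_add_diff_inverse not_less)
      show ?thesis using N by (simp add: copies_def dunion_def ab r1 r2) blast
    qed
  qed
qed

definition bs :: "nat \<Rightarrow> (nat \<Rightarrow> nat \<Rightarrow> bool) \<Rightarrow> nat \<Rightarrow> nat" where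
  "bs n E t = beta_t (t * n) (copies t n E) 1"

lemma bs_add: "bs n E (a + b) \<le> bs n E a + bs n E b"
proof -
  have "bs n E (a + b) = beta_t (a * n + b * n) (dunion (a * n) (copies a n E) (b * n) (copies b n E)) 1"
    by (simp add: bs_def copies_add add_mult_distrib)
  also have "\<dots> \<le> bs n E a + bs n E b" unfolding bs_def by (rule dunion_up)
  finally show ?thesis .
qed

lemma bs_mult: "bs n E (k * t) \<le> k * bs n E t"
proof (induction k)
  case 0 then show ?case by (simp add: bs_def beta_zero_vert)
next
  case (Suc k)
  have "bs n E (Suc k * t) = bs n E (t + k * t)" by simp
  also have "\<dots> \<le> bs n E t + bs n E (k * t)" by (rule bs_add)
  also have "\<dots> \<le> Suc k * bs n E t" using Suc by simp
  finally show ?case .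
qed


context
  fixes n m t :: nat and E F :: "nat \<Rightarrow> nat \<Rightarrow> bool"
begin

definition "cs k = (k mod (n + m) < n)"
definition "cidx k = (if k mod (n + m) < n then (k div (n + m)) * n + k mod (n + m)
                      else (k div (n + m)) * m + (k mod (n + m) - n))"
definition "csa i = (i div n) * (n + m) + i mod n"
definition "csb i = (i div m) * (n + m) + (n + i mod m)"

lemma ch1: "\<forall>i<t * n. csa i < t * (n + m) \<and> cs (csa i) \<and> cidx (csa i) = i"
proof (intro allI impI)
  fix i assume i: "i < t * n"
  then have n: "0 < n" by (cases n) auto
  have q: "i div n < t" using i n by (simp add: div_less_iff_less_mult)
  have r: "i mod n < n" using n by simp
  then have r': "i mod n < n + m" by simp
  have "csa i < t * (n + m)" unfolding csa_def by (rule qr_lt[OF q r'])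
  moreover have "csa i mod (n + m) = i mod n" "csa i div (n + m) = i div n"
    unfolding csa_def using r' by (simp_all only: qr_mod qr_div)
  ultimately show "csa i < t * (n + m) \<and> cs (csa i) \<and> cidx (csa i) = i"
    using r by (simp add: cs_def cidx_def)
qed

lemma ch2: "\<forall>i<t * m. csb i < t * (n + m) \<and> \<not> cs (csb i) \<and> cidx (csb i) = i"
proof (intro allI impI)
  fix i assume i: "i < t * m"
  then have m: "0 < m" by (cases m) auto
  have q: "i div m < t" using i m by (simp add: div_less_iff_less_mult)
  have r: "i mod m < m" using m by simp
  then have r': "n + i mod m < n + m" by simp
  have "csb i < t * (n + m)" unfolding csb_def by (rule qr_lt[OF q r'])
  moreover have "csb i mod (n + m) = n + i mod m" "csb i div (n + m) = i div m"
    unfolding csb_def using r' by (simp_all only: qr_mod qr_div)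
  ultimately show "csb i < t * (n + m) \<and> \<not> cs (csb i) \<and> cidx (csb i) = i"
    by (simp add: cs_def cidx_def)
qed

lemma ch3: "\<forall>k<t * (n + m). cs k \<longrightarrow> cidx k < t * n \<and> csa (cidx k) = k"
proof (intro allI impI)
  fix k assume k: "k < t * (n + m)" and s: "cs k"
  then have P: "0 < n + m" by (cases "n + m") auto
  have q: "k div (n + m) < t" using k P by (simp add: div_less_iff_less_mult)
  have r: "k mod (n + m) < n" using s by (simp add: cs_def)
  have ci: "cidx k = (k div (n + m)) * n + k mod (n + m)" using r by (simp add: cidx_def)
  have "cidx k < t * n" unfolding ci by (rule qr_lt[OF q r])
  moreover have "csa (cidx k) = k"
    unfolding csa_def ci using r by (simp only: qr_mod qr_div) (metis div_mult_mod_eq)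
  ultimately show "cidx k < t * n \<and> csa (cidx k) = k" by simp
qed

lemma ch4: "\<forall>k<t * (n + m). \<not> cs k \<longrightarrow> cidx k < t * m \<and> csb (cidx k) = k"
proof (intro allI impI)
  fix k assume k: "k < t * (n + m)" and s: "\<not> cs k"
  then have P: "0 < n + m" by (cases "n + m") auto
  have q: "k div (n + m) < t" using k P by (simp add: div_less_iff_less_mult)
  have r0: "n \<le> k mod (n + m)" using s by (simp add: cs_def)
  have rP: "k mod (n + m) < n + m" using P by simp
  have r: "k mod (n + m) - n < m" using r0 rP by linarith
  have ci: "cidx k = (k div (n + m)) * m + (k mod (n + m) - n)" using r0 by (simp add: cidx_def)
  have "cidx k < t * m" unfolding ci by (rule qr_lt[OF q r])
  moreover have "csb (cidx k) = k"
  proof -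
    have "csb (cidx k) = (k div (n + m)) * (n + m) + (n + (k mod (n + m) - n))"
      unfolding csb_def ci using r by (simp only: qr_mod qr_div)
    also have "\<dots> = k" using r0 by (simp add: div_mult_mod_eq)
    finally show ?thesis .
  qed
  ultimately show "cidx k < t * m \<and> csb (cidx k) = k" by simp
qed

lemma ch5: "\<forall>k<t * (n + m). \<forall>l<t * (n + m). copies t (n + m) (dunion n E m F) k l \<longleftrightarrow>
   (cs k \<and> cs l \<and> copies t n E (cidx k) (cidx l)) \<or> (\<not> cs k \<and> \<not> cs l \<and> copies t m F (cidx k) (cidx l))"
proof (intro allI impI)
  fix k l assume k: "k < t * (n + m)" and l: "l < t * (n + m)"
  have c1: "cs k \<longrightarrow> cidx k < t * n" "cs l \<longrightarrow> cidx l < t * n" using ch3 k l by auto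
  have c2: "\<not> cs k \<longrightarrow> cidx k < t * m" "\<not> cs l \<longrightarrow> cidx l < t * m" using ch4 k l by auto
  show "copies t (n + m) (dunion n E m F) k l \<longleftrightarrow>
   (cs k \<and> cs l \<and> copies t n E (cidx k) (cidx l)) \<or> (\<not> cs k \<and> \<not> cs l \<and> copies t m F (cidx k) (cidx l))"
  proof (cases "cs k"; cases "cs l")
    assume sk: "cs k" and sl: "cs l"
    have rk: "k mod (n + m) < n" and rl: "l mod (n + m) < n" using sk sl by (auto simp: cs_def)
    have ik: "cidx k = (k div (n + m)) * n + k mod (n + m)" using rk by (simp add: cidx_def)
    have il: "cidx l = (l div (n + m)) * n + l mod (n + m)" using rl by (simp add: cidx_def)
    have "cidx k div n = k div (n + m)" "cidx k mod n = k mod (n + m)" 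
      "cidx l div n = l div (n + m)" "cidx l mod n = l mod (n + m)"
      unfolding ik il using rk rl by (simp_all only: qr_mod qr_div)
    then show ?thesis using sk sl c1 k l rk rl by (simp add: copies_def dunion_def)
  next
    assume sk: "cs k" and sl: "\<not> cs l"
    then show ?thesis by (auto simp: copies_def dunion_def cs_def)
  next
    assume sk: "\<not> cs k" and sl: "cs l"
    then show ?thesis by (auto simp: copies_def dunion_def cs_def)
  next
    assume sk: "\<not> cs k" and sl: "\<not> cs l"
    have P: "0 < n + m" using k by (cases "n + m") auto
    have rk: "n \<le> k mod (n + m)" and rl: "n \<le> l mod (n + m)" using sk sl by (auto simp: cs_def)
    have rk': "k mod (n + m) - n < m" and rl': "l mod (n + m) - n < m"
      using rk rl P mod_less_divisor[OF P, of k] mod_less_divisor[OF P, of l] by linarith+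
    have ik: "cidx k = (k div (n + m)) * m + (k mod (n + m) - n)" using rk by (simp add: cidx_def)
    have il: "cidx l = (l div (n + m)) * m + (l mod (n + m) - n)" using rl by (simp add: cidx_def)
    have "cidx k div m = k div (n + m)" "cidx k mod m = k mod (n + m) - n" 
      "cidx l div m = l div (n + m)" "cidx l mod m = l mod (n + m) - n"
      unfolding ik il using rk' rl' by (simp_all only: qr_mod qr_div)
    then show ?thesis using sk sl c2 k l rk rl mod_less_divisor[OF P, of k] mod_less_divisor[OF P, of l]
      by (auto simp: copies_def dunion_def)
  qed
qed

lemma copies_up: "bs (n + m) (dunion n E m F) t \<le> bs n E t + bs m F t"
  unfolding bs_def
  by (rule relabel_up[where N="t * (n + m)" and NA="t * n" and NB="t * m" and s=cs and idx=cidx and sa=csa and sb=csb])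
     (use ch1 ch2 ch3 ch4 ch5 in auto)

lemma copies_low: "real (bs n E t) + real (bs m F t) \<le> real (bs (n + m) (dunion n E m F) t) + 2
     + log 2 (real (t * n) + 2) + log 2 (real (t * m) + 2)"
proof -
  have "real (beta_t (t * n) (copies t n E) 1) + real (beta_t (t * m) (copies t m F) 1)
     \<le> real (beta_t (t * (n + m)) (copies t (n + m) (dunion n E m F)) 1) + 2
     + log 2 (real 1 * real (t * n) + 2) + log 2 (real 1 * real (t * m) + 2)"
    by (rule relabel_low[where N="t * (n + m)" and NA="t * n" and NB="t * m" and s=cs and idx=cidx and sa=csa and sb=csb])
     (use ch1 ch2 ch3 ch4 ch5 in auto)
  then show ?thesis by (simp add: bs_def mult.commute)
qed

end


lemma log_split:
  fixes k :: nat and x :: real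
  assumes k: "k \<ge> 1" and x: "x \<ge> 0"
  shows "log 2 (real k * x + 2) \<le> log 2 (real k) + log 2 (x + 2)"
proof -
  have "real k * x + 2 \<le> real k * (x + 2)" using k x by (simp add: algebra_simps)
  moreover have "0 \<le> real k * x" using x by simp
  ultimately have "log 2 (real k * x + 2) \<le> log 2 (real k * (x + 2))" by (intro log_mono) auto
  also have "\<dots> = log 2 (real k) + log 2 (x + 2)" using k x by (intro log_mult_pos) auto
  finally show ?thesis .
qed

lemma lim_aux: "((\<lambda>k::nat. C / real k + 2 * (ln (real k) / real k) / ln 2) \<longlongrightarrow> 0) sequentially"
proof -
  have l1: "((\<lambda>k::nat. ln (real k) / real k) \<longlongrightarrow> 0) sequentially"
    using filterlim_compose[OF ln_x_over_x_tendsto_0 filterlim_real_sequentially] by simp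
  have "((\<lambda>k::nat. C / real k + 2 * (ln (real k) / real k) / ln 2) \<longlongrightarrow> 0 + 2 * 0 / ln 2) sequentially"
    by (intro tendsto_intros l1) auto
  then show ?thesis by simp
qed

lemma abstract_inf:
  fixes a b c :: "nat \<Rightarrow> nat" and n m :: nat
  assumes up: "\<And>t. c t \<le> a t + b t"
    and low: "\<And>t. real (a t) + real (b t) \<le> real (c t) + 2 + log 2 (real t * real n + 2) + log 2 (real t * real m + 2)"
    and ma: "\<And>k t. a (k * t) \<le> k * a t" and mb: "\<And>k t. b (k * t) \<le> k * b t" and mc: "\<And>k t. c (k * t) \<le> k * c t"
  shows "(INF t\<in>{1..}. real (c t) / real t) = (INF t\<in>{1..}. real (a t) / real t) + (INF t\<in>{1..}. real (b t) / real t)"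
proof -
  define A where "A = (INF t\<in>{1..}. real (a t) / real t)"
  define B where "B = (INF t\<in>{1..}. real (b t) / real t)"
  define C where "C = (INF t\<in>{1..}. real (c t) / real t)"
  have ne: "{1::nat..} \<noteq> {}" by auto
  have bda: "bdd_below ((\<lambda>t. real (a t) / real t) ` {1..})" by (rule bdd_belowI2[of _ 0]) auto
  have bdb: "bdd_below ((\<lambda>t. real (b t) / real t) ` {1..})" by (rule bdd_belowI2[of _ 0]) auto
  have bdc: "bdd_below ((\<lambda>t. real (c t) / real t) ` {1..})" by (rule bdd_belowI2[of _ 0]) auto
  have Ale: "A \<le> real (a t) / real t" if "t \<ge> 1" for t unfolding A_def by (rule cINF_lower[OF bda]) (use that in auto)
  have Ble: "B \<le> real (b t) / real t" if "t \<ge> 1" for t unfolding B_def by (rule cINF_lower[OF bdb]) (use that in auto)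
  have Cle: "C \<le> real (c t) / real t" if "t \<ge> 1" for t unfolding C_def by (rule cINF_lower[OF bdc]) (use that in auto)
  have step1: "C \<le> real (a s) / real s + real (b t) / real t" if s: "s \<ge> 1" and t: "t \<ge> 1" for s t
  proof -
    have st: "s * t \<ge> 1" using s t by simp
    have "c (s * t) \<le> a (t * s) + b (s * t)" using up[of "s * t"] by (simp add: mult.commute)
    also have "\<dots> \<le> t * a s + s * b t" using ma[of t s] mb[of s t] by simp
    finally have "real (c (s * t)) \<le> real t * real (a s) + real s * real (b t)"
      by (metis of_nat_add of_nat_le_iff of_nat_mult)
    then have "real (c (s * t)) / real (s * t) \<le> (real t * real (a s) + real s * real (b t)) / (real s * real t)"
      using st by (simp add: divide_right_mono)
    also have "\<dots> = real (a s) / real s + real (b t) / real t" using s t by (simp add: field_simps)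
    finally show ?thesis using Cle[OF st] by linarith
  qed
  have "C - real (b t) / real t \<le> A" if t: "t \<ge> 1" for t
    unfolding A_def
  proof (rule cINF_greatest[OF ne])
    fix s :: nat assume "s \<in> {1..}"
    then have "C \<le> real (a s) / real s + real (b t) / real t" using step1[of s t] t by simp
    then show "C - real (b t) / real t \<le> real (a s) / real s" by linarith
  qed
  then have "C - A \<le> real (b t) / real t" if "t \<ge> 1" for t using that by fastforce
  then have "C - A \<le> B" unfolding B_def by (intro cINF_greatest[OF ne]) auto
  moreover have "A + B \<le> C"
    unfolding C_def
  proof (rule cINF_greatest[OF ne])
    fix t :: nat assume "t \<in> {1..}"
    then have t: "t \<ge> 1" by simp
    define C0 where "C0 = 2 + log 2 (real t * real n + 2) + log 2 (real t * real m + 2)"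
    define X where "X = (\<lambda>k::nat. real (c t) / real t + (C0 / real k + 2 * (ln (real k) / real k) / ln 2))"
    have lim: "X \<longlonglongrightarrow> real (c t) / real t + 0" unfolding X_def by (intro tendsto_add tendsto_const lim_aux)
    have "\<forall>k\<ge>1. A + B \<le> X k"
    proof (intro allI impI)
      fix k :: nat assume k: "k \<ge> 1"
      have kt: "k * t \<ge> 1" using k t by simp
      define e where "e = 2 + log 2 (real (k * t) * real n + 2) + log 2 (real (k * t) * real m + 2)"
      have l0: "0 \<le> log 2 (x + 2)" if "0 \<le> x" for x :: real
        using that by (subst zero_le_log_cancel_iff) auto
      have e0: "e \<ge> 0" unfolding e_def using l0[of "real (k * t) * real n"] l0[of "real (k * t) * real m"] by simp
      have "A + B \<le> real (a (k * t)) / real (k * t) + real (b (k * t)) / real (k * t)"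
        using Ale[OF kt] Ble[OF kt] by linarith
      also have "\<dots> = (real (a (k * t)) + real (b (k * t))) / real (k * t)" by (simp add: add_divide_distrib)
      also have "\<dots> \<le> (real (c (k * t)) + e) / real (k * t)"
        using low[of "k * t"] kt unfolding e_def by (intro divide_right_mono) auto
      also have "\<dots> \<le> (real k * real (c t) + e) / real (k * t)"
        using mc[of k t] kt by (intro divide_right_mono) (auto, metis of_nat_le_iff of_nat_mult)
      also have "\<dots> = real (c t) / real t + e / real (k * t)" using k t by (simp add: field_simps)
      also have "e / real (k * t) \<le> e / real k"
        using e0 k t by (intro divide_left_mono) (auto simp: mult_le_cancel_left1)
      also have "e \<le> C0 + 2 * log 2 (real k)"
      proof -
        have "log 2 (real (k * t) * real n + 2) \<le> log 2 (real k) + log 2 (real t * real n + 2)"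
          using log_split[OF k, of "real t * real n"] by (simp add: mult.assoc)
        moreover have "log 2 (real (k * t) * real m + 2) \<le> log 2 (real k) + log 2 (real t * real m + 2)"
          using log_split[OF k, of "real t * real m"] by (simp add: mult.assoc)
        ultimately show ?thesis unfolding e_def C0_def by linarith
      qed
      then have "e / real k \<le> (C0 + 2 * log 2 (real k)) / real k" using k by (intro divide_right_mono) auto
      also have "(C0 + 2 * log 2 (real k)) / real k = C0 / real k + 2 * (ln (real k) / real k) / ln 2"
        using k by (simp add: log_def field_simps)
      finally show "A + B \<le> X k" unfolding X_def by linarith
    qed
    then show "A + B \<le> real (c t) / real t"
      using LIMSEQ_le_const[OF lim] by auto
  qed
  ultimately show ?thesis unfolding A_def B_def C_def by linarith
qed


theorem lemma2p16:
  fixes n m :: nat and E F :: "nat \<Rightarrow> nat \<Rightarrow> bool"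
  assumes "undirected n E" and "undirected m F"
  shows "beta (n + m) (dunion n E m F) = beta n E + beta m F \<and>
         beta_star (n + m) (dunion n E m F) = beta_star n E + beta_star m F"
proof
  show "beta (n + m) (dunion n E m F) = beta n E + beta m F"
    unfolding beta_def
  proof (rule abstract_inf[where a="\<lambda>t. beta_t n E t" and b="\<lambda>t. beta_t m F t"
        and c="\<lambda>t. beta_t (n + m) (dunion n E m F) t" and n=n and m=m])
    show "\<And>t. beta_t (n + m) (dunion n E m F) t \<le> beta_t n E t + beta_t m F t" by (rule dunion_up)
    show "\<And>t. real (beta_t n E t) + real (beta_t m F t) \<le> real (beta_t (n + m) (dunion n E m F) t) + 2
         + log 2 (real t * real n + 2) + log 2 (real t * real m + 2)" by (rule dunion_low)
  qed (rule beta_alph_mult)+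
  show "beta_star (n + m) (dunion n E m F) = beta_star n E + beta_star m F"
  proof -
    have "(INF t\<in>{1..}. real (bs (n + m) (dunion n E m F) t) / real t)
        = (INF t\<in>{1..}. real (bs n E t) / real t) + (INF t\<in>{1..}. real (bs m F t) / real t)"
    proof (rule abstract_inf[where a="\<lambda>t. bs n E t" and b="\<lambda>t. bs m F t"
        and c="\<lambda>t. bs (n + m) (dunion n E m F) t" and n=n and m=m])
      show "\<And>t. bs (n + m) (dunion n E m F) t \<le> bs n E t + bs m F t" by (rule copies_up)
      show "\<And>t. real (bs n E t) + real (bs m F t) \<le> real (bs (n + m) (dunion n E m F) t) + 2
         + log 2 (real t * real n + 2) + log 2 (real t * real m + 2)"
        using copies_low by simp
    qed (rule bs_mult)+
    then show ?thesis unfolding beta_star_def bs_def .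
  qed
qed

end
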